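(* Let $(X,\sigma,\tau)$ be a full, separable, chronologically dense Lorentzian metric space satisfying the S-property which is globally hyperbolic with respect to a compatible causal relation $\leq$, and let $(\overline{X},\sigma_{chr},\overline{\tau})$ be its c-completion. Assume that no two distinct points of $\partial X$ are related by $\leq_{\overline{\tau}}$. Then for any $(P,F)\in\overline{X}$ and any $\sigma_{chr}$-neighbourhood $U$ of $(P,F)$ there is a $\sigma_{chr}$-neighbourhood $V$ of $(P,F)$ such that whenever $a,b,c\in\overline{X}$ satisfy $a\,\overline{\ll}\,b\,\overline{\ll}\,c$ and $a,c\in V$, then $b\in U$.
   Context: A Lorentzian metric space $(X,\sigma,\tau)$ is a topological space with $\tau:X\times X\to[0,\infty]$ lower semicontinuous and satisfying $\tau(x,z)\geq\tau(x,y)+\tau(y,z)$ whenever $\tau(x,y),\tau(y,z)>0$. Write $x\ll y$ iff $\tau(x,y)>0$, $I^\pm(x)$ for chronological future/past, $I^\pm[A]=\bigcup_{a\in A}I^\pm(a)$. Full: $I^+(x)\neq\emptyset\neq I^-(x)$ for all $x$. Future (resp. past) chain: $x_n\ll x_{n+1}$ (resp. $x_{n+1}\ll x_n$) for all $n$. Separable: there is a countable $S$ with $x\ll y\Rightarrow\exists s\in S$, $x\ll s\ll y$. Chronologically dense: every $x$ with $I^-(x)\neq\emptyset$ (resp. $I^+(x)\neq\emptyset$) is the $\sigma$-limit of a future (resp. past) chain. A compatible causal relation is a pre-order $\leq$ containing $\ll$ with $\tau(x,z)\geq\tau(x,y)+\tau(y,z)$ for $x\leq y\leq z$; with $J(x,y)=\{z:x\leq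 z\leq y\}$, $X$ is globally hyperbolic if $\leq$ is antisymmetric and every $J(x,y)$ is $\sigma$-compact. Past set: $P=I^-[P]$; $\downarrow S=I^-[\{p:p\ll q\ \forall q\in S\}]$; IP: past set not the union of two proper past subsets; PIP: IP of the form $I^-(p)$; future sets, $\uparrow S$, IF, PIF dually. For nonempty IP $P$ and IF $F$, $P\sim_S F$ iff $P$ is a maximal IP in $\downarrow F$ and $F$ a maximal IF in $\uparrow P$; $P\sim_S\emptyset$ (resp. $\emptyset\sim_S F$) if the nonempty $P$ (resp. $F$) is S-related to no nonempty IF (resp. IP). S-property: for all $x$, $I^-(x)\sim_S I^+(x)$, and no PIF other than $I^+(x)$ (resp. no PIP other than $I^-(x)$) is S-related to $I^-(x)$ (resp. $I^+(x)$). c-completion $\overline X=\{(P,F):P\sim_S F\}$, $\mathbf{i}(x)=(I^-(x),I^+(x))$, $\partial X=\overline X\setminus\mathbf{i}(X)$. $\sigma_{chr}$: closed sets are those $C$ with $L(s)\subset C$ for every sequence $s$ in $C$, where $(P,F)\in L(\{(P_n,F_n)\})$ iff ($P\neq\emptyset\Rightarrow P\subset LI(P_n)$ and $P$ is a maximal IP in $LS(P_n)$) and ($F\neq\emptyset\Rightarrow F\subset LI(F_n)$ and $F$ is a maximal IF in $LS(F_n)$), $LI,LS$ the set-theoretic lower/upper limits. $\overline\tau((P,F),(P',F'))=0$ if $F=\emptyset$ or $P'=\emptyset$, otherwise $\lim_n\tau(q_n,p'_n)$ for a past chain $\{q_n\}$ with $I^+[\{q_n\}]=F$ and a future chain $\{p'_n\}$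 with $I^-[\{p'_n\}]=P'$. $a\,\overline\ll\, b$ iff $\overline\tau(a,b)>0$; $\overline I^\pm(a)$ denote the corresponding futures/pasts in $\overline X$; $a\leq_{\overline\tau}b$ iff $\overline I^-(a)\subset\overline I^-(b)$ and $\overline I^+(b)\subset\overline I^+(a)$. *)

theory Defs
  imports "HOL-Analysis.Analysis"
begin

text \<open>The point set X is the whole type 'a (topspace sig = UNIV); the
time separation tau takes values in [0,\<infinity>] (type ennreal).\<close>

definition chr :: "('a \<Rightarrow> 'a \<Rightarrow> ennreal) \<Rightarrow> 'a \<Rightarrow> 'a \<Rightarrow> bool" where
  "chr tau x y \<longleftrightarrow> 0 < tau x y"

definition Ifut :: "('a \<Rightarrow> 'a \<Rightarrow> ennreal) \<Rightarrow> 'a \<Rightarrow> 'a set" where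
  "Ifut tau x = {y. chr tau x y}"

definition Ipast :: "('a \<Rightarrow> 'a \<Rightarrow> ennreal) \<Rightarrow> 'a \<Rightarrow> 'a set" where
  "Ipast tau x = {y. chr tau y x}"

definition Ifut_set :: "('a \<Rightarrow> 'a \<Rightarrow> ennreal) \<Rightarrow> 'a set \<Rightarrow> 'a set" where
  "Ifut_set tau A = (\<Union>a\<in>A. Ifut tau a)"

definition Ipast_set :: "('a \<Rightarrow> 'a \<Rightarrow> ennreal) \<Rightarrow> 'a set \<Rightarrow> 'a set" where
  "Ipast_set tau A = (\<Union>a\<in>A. Ipast tau a)"

definition lorentzian_metric_space :: "'a topology \<Rightarrow> ('a \<Rightarrow> 'a \<Rightarrow> ennreal) \<Rightarrow> bool" where
  "lorentzian_metric_space sig tau \<longleftrightarrow>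
     topspace sig = UNIV \<and>
     (\<forall>t. openin (prod_topology sig sig) {z. t < tau (fst z) (snd z)}) \<and>
     (\<forall>x y z. 0 < tau x y \<and> 0 < tau y z \<longrightarrow> tau x y + tau y z \<le> tau x z)"

definition full :: "('a \<Rightarrow> 'a \<Rightarrow> ennreal) \<Rightarrow> bool" where
  "full tau \<longleftrightarrow> (\<forall>x. Ifut tau x \<noteq> {} \<and> Ipast tau x \<noteq> {})"

definition future_chain :: "('a \<Rightarrow> 'a \<Rightarrow> ennreal) \<Rightarrow> (nat \<Rightarrow> 'a) \<Rightarrow> bool" where
  "future_chain tau c \<longleftrightarrow> (\<forall>n. chr tau (c n) (c (Suc n)))"

definition past_chain :: "('a \<Rightarrow> 'a \<Rightarrow> ennreal) \<Rightarrow> (nat \<Rightarrow> 'a) \<Rightarrow> bool" where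
  "past_chain tau c \<longleftrightarrow> (\<forall>n. chr tau (c (Suc n)) (c n))"

definition separable_lms :: "('a \<Rightarrow> 'a \<Rightarrow> ennreal) \<Rightarrow> bool" where
  "separable_lms tau \<longleftrightarrow>
     (\<exists>S. countable S \<and> (\<forall>x y. chr tau x y \<longrightarrow> (\<exists>s\<in>S. chr tau x s \<and> chr tau s y)))"

definition chron_dense :: "'a topology \<Rightarrow> ('a \<Rightarrow> 'a \<Rightarrow> ennreal) \<Rightarrow> bool" where
  "chron_dense sig tau \<longleftrightarrow>
     (\<forall>x. Ipast tau x \<noteq> {} \<longrightarrow>
          (\<exists>c. future_chain tau c \<and> limitin sig c x sequentially)) \<and>
     (\<forall>x. Ifut tau x \<noteq> {} \<longrightarrow>
          (\<exists>c. past_chain tau c \<and> limitin sig c x sequentially))"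

definition compatible_causal :: "('a \<Rightarrow> 'a \<Rightarrow> ennreal) \<Rightarrow> ('a \<Rightarrow> 'a \<Rightarrow> bool) \<Rightarrow> bool" where
  "compatible_causal tau le \<longleftrightarrow>
     (\<forall>x. le x x) \<and> (\<forall>x y z. le x y \<and> le y z \<longrightarrow> le x z) \<and>
     (\<forall>x y. chr tau x y \<longrightarrow> le x y) \<and>
     (\<forall>x y z. le x y \<and> le y z \<longrightarrow> tau x y + tau y z \<le> tau x z)"

definition Jdiamond :: "('a \<Rightarrow> 'a \<Rightarrow> bool) \<Rightarrow> 'a \<Rightarrow> 'a \<Rightarrow> 'a set" where
  "Jdiamond le x y = {z. le x z \<and> le z y}"

definition globally_hyperbolic :: "'a topology \<Rightarrow> ('a \<Rightarrow> 'a \<Rightarrow> ennreal) \<Rightarrow> ('a \<Rightarrow> 'a \<Rightarrow> bool) \<Rightarrow> bool" where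
  "globally_hyperbolic sig tau le \<longleftrightarrow>
     compatible_causal tau le \<and>
     (\<forall>x y. le x y \<and> le y x \<longrightarrow> x = y) \<and>
     (\<forall>x y. compactin sig (Jdiamond le x y))"

definition past_set :: "('a \<Rightarrow> 'a \<Rightarrow> ennreal) \<Rightarrow> 'a set \<Rightarrow> bool" where
  "past_set tau P \<longleftrightarrow> P = Ipast_set tau P"

definition future_set :: "('a \<Rightarrow> 'a \<Rightarrow> ennreal) \<Rightarrow> 'a set \<Rightarrow> bool" where
  "future_set tau F \<longleftrightarrow> F = Ifut_set tau F"

definition common_past :: "('a \<Rightarrow> 'a \<Rightarrow> ennreal) \<Rightarrow> 'a set \<Rightarrow> 'a set" where
  "common_past tau S = Ipast_set tau {p. \<forall>q\<in>S. chr tau p q}"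

definition common_future :: "('a \<Rightarrow> 'a \<Rightarrow> ennreal) \<Rightarrow> 'a set \<Rightarrow> 'a set" where
  "common_future tau S = Ifut_set tau {p. \<forall>q\<in>S. chr tau q p}"

definition IP :: "('a \<Rightarrow> 'a \<Rightarrow> ennreal) \<Rightarrow> 'a set \<Rightarrow> bool" where
  "IP tau P \<longleftrightarrow> P \<noteq> {} \<and> past_set tau P \<and>
     \<not> (\<exists>P1 P2. past_set tau P1 \<and> past_set tau P2 \<and> P1 \<subset> P \<and> P2 \<subset> P \<and> P = P1 \<union> P2)"

definition IF :: "('a \<Rightarrow> 'a \<Rightarrow> ennreal) \<Rightarrow> 'a set \<Rightarrow> bool" where
  "IF tau F \<longleftrightarrow> F \<noteq> {} \<and> future_set tau F \<and>
     \<not> (\<exists>F1 F2. future_set tau F1 \<and> future_set tau F2 \<and> F1 \<subset> F \<and> F2 \<subset> F \<and> F = F1 \<union> F2)"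

definition maxIP_in :: "('a \<Rightarrow> 'a \<Rightarrow> ennreal) \<Rightarrow> 'a set \<Rightarrow> 'a set \<Rightarrow> bool" where
  "maxIP_in tau P A \<longleftrightarrow> IP tau P \<and> P \<subseteq> A \<and>
     (\<forall>P'. IP tau P' \<and> P \<subseteq> P' \<and> P' \<subseteq> A \<longrightarrow> P' = P)"

definition maxIF_in :: "('a \<Rightarrow> 'a \<Rightarrow> ennreal) \<Rightarrow> 'a set \<Rightarrow> 'a set \<Rightarrow> bool" where
  "maxIF_in tau F A \<longleftrightarrow> IF tau F \<and> F \<subseteq> A \<and>
     (\<forall>F'. IF tau F' \<and> F \<subseteq> F' \<and> F' \<subseteq> A \<longrightarrow> F' = F)"

definition S_rel_ne :: "('a \<Rightarrow> 'a \<Rightarrow> ennreal) \<Rightarrow> 'a set \<Rightarrow> 'a set \<Rightarrow> bool" where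
  "S_rel_ne tau P F \<longleftrightarrow> IP tau P \<and> IF tau F \<and>
     maxIP_in tau P (common_past tau F) \<and> maxIF_in tau F (common_future tau P)"

definition S_rel :: "('a \<Rightarrow> 'a \<Rightarrow> ennreal) \<Rightarrow> 'a set \<Rightarrow> 'a set \<Rightarrow> bool" where
  "S_rel tau P F \<longleftrightarrow>
     (P \<noteq> {} \<and> F \<noteq> {} \<and> S_rel_ne tau P F) \<or>
     (P \<noteq> {} \<and> F = {} \<and> IP tau P \<and> \<not> (\<exists>F'. F' \<noteq> {} \<and> S_rel_ne tau P F')) \<or>
     (P = {} \<and> F \<noteq> {} \<and> IF tau F \<and> \<not> (\<exists>P'. P' \<noteq> {} \<and> S_rel_ne tau P' F))"

definition S_property :: "('a \<Rightarrow> 'a \<Rightarrow> ennreal) \<Rightarrow> bool" where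
  "S_property tau \<longleftrightarrow>
     (\<forall>x. S_rel tau (Ipast tau x) (Ifut tau x) \<and>
          (\<forall>y. S_rel tau (Ipast tau x) (Ifut tau y) \<longrightarrow> Ifut tau y = Ifut tau x) \<and>
          (\<forall>y. S_rel tau (Ipast tau y) (Ifut tau x) \<longrightarrow> Ipast tau y = Ipast tau x))"

definition cX :: "('a \<Rightarrow> 'a \<Rightarrow> ennreal) \<Rightarrow> ('a set \<times> 'a set) set" where
  "cX tau = {(P, F). S_rel tau P F}"

definition cinj :: "('a \<Rightarrow> 'a \<Rightarrow> ennreal) \<Rightarrow> 'a \<Rightarrow> 'a set \<times> 'a set" where
  "cinj tau x = (Ipast tau x, Ifut tau x)"

definition cboundary :: "('a \<Rightarrow> 'a \<Rightarrow> ennreal) \<Rightarrow> ('a set \<times> 'a set) set" where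
  "cboundary tau = cX tau - range (cinj tau)"

definition LI :: "(nat \<Rightarrow> 'a set) \<Rightarrow> 'a set" where
  "LI A = {x. \<forall>\<^sub>F n in sequentially. x \<in> A n}"

definition LS :: "(nat \<Rightarrow> 'a set) \<Rightarrow> 'a set" where
  "LS A = {x. \<exists>\<^sub>F n in sequentially. x \<in> A n}"

definition chr_limits :: "('a \<Rightarrow> 'a \<Rightarrow> ennreal) \<Rightarrow> (nat \<Rightarrow> 'a set \<times> 'a set) \<Rightarrow> ('a set \<times> 'a set) set" where
  "chr_limits tau s = {(P, F) \<in> cX tau.
     (P \<noteq> {} \<longrightarrow> P \<subseteq> LI (\<lambda>n. fst (s n)) \<and> maxIP_in tau P (LS (\<lambda>n. fst (s n)))) \<and>
     (F \<noteq> {} \<longrightarrow> F \<subseteq> LI (\<lambda>n. snd (s n)) \<and> maxIF_in tau F (LS (\<lambda>n. snd (s n))))}"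

definition chr_closed :: "('a \<Rightarrow> 'a \<Rightarrow> ennreal) \<Rightarrow> ('a set \<times> 'a set) set \<Rightarrow> bool" where
  "chr_closed tau C \<longleftrightarrow> C \<subseteq> cX tau \<and>
     (\<forall>s. (\<forall>n. s n \<in> C) \<longrightarrow> chr_limits tau s \<subseteq> C)"

definition sigma_chr :: "('a \<Rightarrow> 'a \<Rightarrow> ennreal) \<Rightarrow> ('a set \<times> 'a set) topology" where
  "sigma_chr tau = topology (\<lambda>U. U \<subseteq> cX tau \<and> chr_closed tau (cX tau - U))"

definition nbhd :: "'b topology \<Rightarrow> 'b set \<Rightarrow> 'b \<Rightarrow> bool" where
  "nbhd T U p \<longleftrightarrow> (\<exists>W. openin T W \<and> p \<in> W \<and> W \<subseteq> U)"

definition ctau :: "('a \<Rightarrow> 'a \<Rightarrow> ennreal) \<Rightarrow> 'a set \<times> 'a set \<Rightarrow> 'a set \<times> 'a set \<Rightarrow> ennreal" where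
  "ctau tau a b =
     (if snd a = {} \<or> fst b = {} then 0
      else (let q = (SOME q. past_chain tau q \<and> Ifut_set tau (range q) = snd a);
                p = (SOME p. future_chain tau p \<and> Ipast_set tau (range p) = fst b)
            in lim (\<lambda>n. tau (q n) (p n))))"

definition cchr :: "('a \<Rightarrow> 'a \<Rightarrow> ennreal) \<Rightarrow> 'a set \<times> 'a set \<Rightarrow> 'a set \<times> 'a set \<Rightarrow> bool" where
  "cchr tau a b \<longleftrightarrow> 0 < ctau tau a b"

definition cIfut :: "('a \<Rightarrow> 'a \<Rightarrow> ennreal) \<Rightarrow> 'a set \<times> 'a set \<Rightarrow> ('a set \<times> 'a set) set" where
  "cIfut tau a = {b \<in> cX tau. cchr tau a b}"

definition cIpast :: "('a \<Rightarrow> 'a \<Rightarrow> ennreal) \<Rightarrow> 'a set \<times> 'a set \<Rightarrow> ('a set \<times> 'a set) set" where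
  "cIpast tau a = {b \<in> cX tau. cchr tau b a}"

definition cle :: "('a \<Rightarrow> 'a \<Rightarrow> ennreal) \<Rightarrow> 'a set \<times> 'a set \<Rightarrow> 'a set \<times> 'a set \<Rightarrow> bool" where
  "cle tau a b \<longleftrightarrow> cIpast tau a \<subseteq> cIpast tau b \<and> cIfut tau b \<subseteq> cIfut tau a"

end

theory Submission
  imports Defs
begin

lemma chr_trans:
  assumes "lorentzian_metric_space sig tau" "chr tau x y" "chr tau y z"
  shows "chr tau x z"
proof -
  have "tau x y + tau y z \<le> tau x z" using assms unfolding lorentzian_metric_space_def chr_def by blast
  moreover have "tau x y \<le> tau x y + tau y z" by simp
  ultimately show ?thesis using assms(2) unfolding chr_def by (meson order_less_le_trans order_trans)
qed

lemma interp:
  assumes "separable_lms tau" "chr tau x y"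
  shows "\<exists>s. chr tau x s \<and> chr tau s y"
  using assms unfolding separable_lms_def by blast

lemma past_setD1: "past_set tau P \<Longrightarrow> a \<in> P \<Longrightarrow> chr tau w a \<Longrightarrow> w \<in> P"
  unfolding past_set_def Ipast_set_def Ipast_def by blast

lemma past_setD2: "past_set tau P \<Longrightarrow> w \<in> P \<Longrightarrow> \<exists>a\<in>P. chr tau w a"
  unfolding past_set_def Ipast_set_def Ipast_def by blast

lemma future_setD1: "future_set tau F \<Longrightarrow> a \<in> F \<Longrightarrow> chr tau a w \<Longrightarrow> w \<in> F"
  unfolding future_set_def Ifut_set_def Ifut_def by blast

lemma future_setD2: "future_set tau F \<Longrightarrow> w \<in> F \<Longrightarrow> \<exists>a\<in>F. chr tau a w"
  unfolding future_set_def Ifut_set_def Ifut_def by blast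

lemma mem_Ipast_set: "w \<in> Ipast_set tau A \<longleftrightarrow> (\<exists>a\<in>A. chr tau w a)"
  unfolding Ipast_set_def Ipast_def by blast

lemma mem_Ifut_set: "w \<in> Ifut_set tau A \<longleftrightarrow> (\<exists>a\<in>A. chr tau a w)"
  unfolding Ifut_set_def Ifut_def by blast


lemma gen_past:
  assumes lms: "lorentzian_metric_space sig tau" and sep: "separable_lms tau"
  shows "past_set tau (Ipast_set tau A)"
  unfolding past_set_def
proof
  show "Ipast_set tau A \<subseteq> Ipast_set tau (Ipast_set tau A)"
  proof
    fix w assume "w \<in> Ipast_set tau A"
    then obtain a where a: "a \<in> A" "chr tau w a" unfolding mem_Ipast_set by blast
    then obtain s where s: "chr tau w s" "chr tau s a" using interp[OF sep] by blast
    have "s \<in> Ipast_set tau A" using a s unfolding mem_Ipast_set by blast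
    then show "w \<in> Ipast_set tau (Ipast_set tau A)" using s unfolding mem_Ipast_set[of w] by blast
  qed
  show "Ipast_set tau (Ipast_set tau A) \<subseteq> Ipast_set tau A"
  proof
    fix w assume "w \<in> Ipast_set tau (Ipast_set tau A)"
    then obtain b where b: "b \<in> Ipast_set tau A" "chr tau w b" unfolding mem_Ipast_set[of w] by blast
    then obtain a where a: "a \<in> A" "chr tau b a" unfolding mem_Ipast_set by blast
    have "chr tau w a" using chr_trans[OF lms b(2) a(2)] .
    then show "w \<in> Ipast_set tau A" using a(1) unfolding mem_Ipast_set by blast
  qed
qed

lemma gen_fut:
  assumes lms: "lorentzian_metric_space sig tau" and sep: "separable_lms tau"
  shows "future_set tau (Ifut_set tau A)"
  unfolding future_set_def
proof
  show "Ifut_set tau A \<subseteq> Ifut_set tau (Ifut_set tau A)"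
  proof
    fix w assume "w \<in> Ifut_set tau A"
    then obtain a where a: "a \<in> A" "chr tau a w" unfolding mem_Ifut_set by blast
    then obtain s where s: "chr tau a s" "chr tau s w" using interp[OF sep] by blast
    have "s \<in> Ifut_set tau A" using a s unfolding mem_Ifut_set by blast
    then show "w \<in> Ifut_set tau (Ifut_set tau A)" using s unfolding mem_Ifut_set[of w] by blast
  qed
  show "Ifut_set tau (Ifut_set tau A) \<subseteq> Ifut_set tau A"
  proof
    fix w assume "w \<in> Ifut_set tau (Ifut_set tau A)"
    then obtain b where b: "b \<in> Ifut_set tau A" "chr tau b w" unfolding mem_Ifut_set[of w] by blast
    then obtain a where a: "a \<in> A" "chr tau a b" unfolding mem_Ifut_set by blast
    have "chr tau a w" using chr_trans[OF lms a(2) b(2)] .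
    then show "w \<in> Ifut_set tau A" using a(1) unfolding mem_Ifut_set by blast
  qed
qed

lemma IP_directed:
  assumes lms: "lorentzian_metric_space sig tau" and sep: "separable_lms tau"
    and IP: "IP tau P" and u: "u \<in> P" and v: "v \<in> P"
  shows "\<exists>w\<in>P. chr tau u w \<and> chr tau v w"
proof -
  have ps: "past_set tau P" using IP unfolding IP_def by blast
  define P1 where "P1 = Ipast_set tau {z\<in>P. chr tau u z}"
  define P2 where "P2 = Ipast_set tau {z\<in>P. \<not> chr tau u z}"
  have g1: "past_set tau P1" unfolding P1_def by (rule gen_past[OF lms sep])
  have g2: "past_set tau P2" unfolding P2_def by (rule gen_past[OF lms sep])
  have s1: "P1 \<subseteq> P"
  proof
    fix w assume "w \<in> P1"
    then obtain z where "z \<in> P" "chr tau w z" unfolding P1_def mem_Ipast_set by blast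
    then show "w \<in> P" using past_setD1[OF ps] by blast
  qed
  have s2: "P2 \<subseteq> P"
  proof
    fix w assume "w \<in> P2"
    then obtain z where "z \<in> P" "chr tau w z" unfolding P2_def mem_Ipast_set by blast
    then show "w \<in> P" using past_setD1[OF ps] by blast
  qed
  have un: "P = P1 \<union> P2"
  proof
    show "P \<subseteq> P1 \<union> P2"
    proof
      fix w assume "w \<in> P"
      then obtain a where a: "a \<in> P" "chr tau w a" using past_setD2[OF ps] by blast
      show "w \<in> P1 \<union> P2"
      proof (cases "chr tau u a")
        case True
        then have "a \<in> {z\<in>P. chr tau u z}" using a by blast
        then have "w \<in> P1" unfolding P1_def mem_Ipast_set using a(2) by blast
        then show ?thesis by blast
      next
        case False
        then have "a \<in> {z\<in>P. \<not> chr tau u z}" using a by blast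
        then have "w \<in> P2" unfolding P2_def mem_Ipast_set using a(2) by blast
        then show ?thesis by blast
      qed
    qed
  qed (use s1 s2 in blast)
  have "\<not> (\<exists>Q1 Q2. past_set tau Q1 \<and> past_set tau Q2 \<and> Q1 \<subset> P \<and> Q2 \<subset> P \<and> P = Q1 \<union> Q2)"
    using IP unfolding IP_def by (elim conjE)
  then have "\<not> (P1 \<subset> P \<and> P2 \<subset> P)" using g1 g2 un by blast
  then have "P1 = P \<or> P2 = P" using s1 s2 by blast
  moreover have "P2 \<noteq> P"
  proof
    assume "P2 = P"
    then have "u \<in> P2" using u by simp
    then obtain z where "z \<in> {z\<in>P. \<not> chr tau u z}" "chr tau u z" unfolding P2_def mem_Ipast_set by blast
    then show False by blast
  qed
  ultimately have "v \<in> P1" using v by blast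
  then obtain z where "z \<in> {z\<in>P. chr tau u z}" "chr tau v z" unfolding P1_def mem_Ipast_set by blast
  then show ?thesis by blast
qed

lemma IF_directed:
  assumes lms: "lorentzian_metric_space sig tau" and sep: "separable_lms tau"
    and IF: "IF tau P" and u: "u \<in> P" and v: "v \<in> P"
  shows "\<exists>w\<in>P. chr tau w u \<and> chr tau w v"
proof -
  have ps: "future_set tau P" using IF unfolding IF_def by blast
  define P1 where "P1 = Ifut_set tau {z\<in>P. chr tau z u}"
  define P2 where "P2 = Ifut_set tau {z\<in>P. \<not> chr tau z u}"
  have g1: "future_set tau P1" unfolding P1_def by (rule gen_fut[OF lms sep])
  have g2: "future_set tau P2" unfolding P2_def by (rule gen_fut[OF lms sep])
  have s1: "P1 \<subseteq> P"
  proof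
    fix w assume "w \<in> P1"
    then obtain z where "z \<in> P" "chr tau z w" unfolding P1_def mem_Ifut_set by blast
    then show "w \<in> P" using future_setD1[OF ps] by blast
  qed
  have s2: "P2 \<subseteq> P"
  proof
    fix w assume "w \<in> P2"
    then obtain z where "z \<in> P" "chr tau z w" unfolding P2_def mem_Ifut_set by blast
    then show "w \<in> P" using future_setD1[OF ps] by blast
  qed
  have un: "P = P1 \<union> P2"
  proof
    show "P \<subseteq> P1 \<union> P2"
    proof
      fix w assume "w \<in> P"
      then obtain a where a: "a \<in> P" "chr tau a w" using future_setD2[OF ps] by blast
      show "w \<in> P1 \<union> P2"
      proof (cases "chr tau a u")
        case True
        then have "a \<in> {z\<in>P. chr tau z u}" using a by blast
        then have "w \<in> P1" unfolding P1_def mem_Ifut_set using a(2) by blast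
        then show ?thesis by blast
      next
        case False
        then have "a \<in> {z\<in>P. \<not> chr tau z u}" using a by blast
        then have "w \<in> P2" unfolding P2_def mem_Ifut_set using a(2) by blast
        then show ?thesis by blast
      qed
    qed
  qed (use s1 s2 in blast)
  have "\<not> (\<exists>Q1 Q2. future_set tau Q1 \<and> future_set tau Q2 \<and> Q1 \<subset> P \<and> Q2 \<subset> P \<and> P = Q1 \<union> Q2)"
    using IF unfolding IF_def by (elim conjE)
  then have "\<not> (P1 \<subset> P \<and> P2 \<subset> P)" using g1 g2 un by blast
  then have "P1 = P \<or> P2 = P" using s1 s2 by blast
  moreover have "P2 \<noteq> P"
  proof
    assume "P2 = P"
    then have "u \<in> P2" using u by simp
    then obtain z where "z \<in> {z\<in>P. \<not> chr tau z u}" "chr tau z u" unfolding P2_def mem_Ifut_set by blast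
    then show False by blast
  qed
  ultimately have "v \<in> P1" using v by blast
  then obtain z where "z \<in> {z\<in>P. chr tau z u}" "chr tau z v" unfolding P1_def mem_Ifut_set by blast
  then show ?thesis by blast
qed


lemma fchain_lt:
  assumes lms: "lorentzian_metric_space sig tau" and c: "future_chain tau x" and mn: "m < n"
  shows "chr tau (x m) (x n)"
  using mn
proof (induction n)
  case 0 then show ?case by simp
next
  case (Suc n)
  have st: "chr tau (x n) (x (Suc n))" using c unfolding future_chain_def by blast
  show ?case
  proof (cases "m = n")
    case True then show ?thesis using st by simp
  next
    case False
    then have "m < n" using Suc.prems by simp
    then have "chr tau (x m) (x n)" using Suc.IH by blast
    then show ?thesis using chr_trans[OF lms _ st] by blast
  qed
qed

lemma pchain_lt:
  assumes lms: "lorentzian_metric_space sig tau" and c: "past_chain tau x" and mn: "m < n"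
  shows "chr tau (x n) (x m)"
  using mn
proof (induction n)
  case 0 then show ?case by simp
next
  case (Suc n)
  have st: "chr tau (x (Suc n)) (x n)" using c unfolding past_chain_def by blast
  show ?case
  proof (cases "m = n")
    case True then show ?thesis using st by simp
  next
    case False
    then have "m < n" using Suc.prems by simp
    then have "chr tau (x n) (x m)" using Suc.IH by blast
    then show ?thesis using chr_trans[OF lms st] by blast
  qed
qed

lemma fchain_le:
  assumes lms: "lorentzian_metric_space sig tau" and c: "future_chain tau x" and mn: "m \<le> n"
    and w: "chr tau w (x m)"
  shows "chr tau w (x n)"
proof (cases "m = n")
  case True then show ?thesis using w by simp
next
  case False then have "m < n" using mn by simp
  then show ?thesis using chr_trans[OF lms w fchain_lt[OF lms c]] by blast
qed

lemma pchain_le: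
  assumes lms: "lorentzian_metric_space sig tau" and c: "past_chain tau x" and mn: "m \<le> n"
    and w: "chr tau (x m) w"
  shows "chr tau (x n) w"
proof (cases "m = n")
  case True then show ?thesis using w by simp
next
  case False then have "m < n" using mn by simp
  then show ?thesis using chr_trans[OF lms pchain_lt[OF lms c] w] by blast
qed

lemma fchain_mem: "future_chain tau x \<Longrightarrow> x n \<in> Ipast_set tau (range x)"
  unfolding future_chain_def mem_Ipast_set by blast

lemma pchain_mem: "past_chain tau x \<Longrightarrow> x n \<in> Ifut_set tau (range x)"
  unfolding past_chain_def mem_Ifut_set by blast

lemma IP_chain:
  assumes lms: "lorentzian_metric_space sig tau" and sep: "separable_lms tau" and IP: "IP tau P"
  shows "\<exists>x. future_chain tau x \<and> Ipast_set tau (range x) = P"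
proof -
  obtain S where S: "countable S" "\<And>x y. chr tau x y \<Longrightarrow> \<exists>s\<in>S. chr tau x s \<and> chr tau s y"
    using sep unfolding separable_lms_def by blast
  have ps: "past_set tau P" using IP unfolding IP_def by blast
  have dense: "\<exists>s\<in>S \<inter> P. chr tau w s" if "w \<in> P" for w
  proof -
    obtain a where a: "a \<in> P" "chr tau w a" using past_setD2[OF ps \<open>w \<in> P\<close>] by blast
    obtain s where s: "s \<in> S" "chr tau w s" "chr tau s a" using S(2)[OF a(2)] by blast
    have "s \<in> P" using past_setD1[OF ps a(1) s(3)] .
    then show ?thesis using s by blast
  qed
  obtain w0 where "w0 \<in> P" using IP unfolding IP_def by blast
  then have Tne: "S \<inter> P \<noteq> {}" using dense by blast
  have Tc: "countable (S \<inter> P)" using S(1) by simp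
  define t where "t = from_nat_into (S \<inter> P)"
  have rt: "range t = S \<inter> P" unfolding t_def using range_from_nat_into[OF Tne Tc] .
  have tP: "t n \<in> P" for n using rt by blast
  define x where "x = rec_nat (t 0) (\<lambda>n xn. SOME w. w \<in> P \<and> chr tau xn w \<and> chr tau (t (Suc n)) w)"
  have x0: "x 0 = t 0" unfolding x_def by simp
  have xS: "x (Suc n) = (SOME w. w \<in> P \<and> chr tau (x n) w \<and> chr tau (t (Suc n)) w)" for n
    unfolding x_def by simp
  have xP: "x n \<in> P" for n
  proof (induction n)
    case 0 then show ?case using x0 tP by simp
  next
    case (Suc n)
    have "\<exists>w. w \<in> P \<and> chr tau (x n) w \<and> chr tau (t (Suc n)) w"
      using IP_directed[OF lms sep IP Suc.IH tP] by blast
    from someI_ex[OF this] show ?case unfolding xS by blast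
  qed
  have step: "chr tau (x n) (x (Suc n)) \<and> chr tau (t (Suc n)) (x (Suc n))" for n
  proof -
    have "\<exists>w. w \<in> P \<and> chr tau (x n) w \<and> chr tau (t (Suc n)) w"
      using IP_directed[OF lms sep IP xP tP] by blast
    from someI_ex[OF this] show ?thesis unfolding xS by blast
  qed
  have fc: "future_chain tau x" unfolding future_chain_def using step by blast
  have "Ipast_set tau (range x) = P"
  proof
    show "Ipast_set tau (range x) \<subseteq> P"
    proof
      fix w assume "w \<in> Ipast_set tau (range x)"
      then obtain n where "chr tau w (x n)" unfolding mem_Ipast_set by blast
      then show "w \<in> P" using past_setD1[OF ps xP] by blast
    qed
    show "P \<subseteq> Ipast_set tau (range x)"
    proof
      fix w assume "w \<in> P"
      then obtain s where s: "s \<in> S \<inter> P" "chr tau w s" using dense by blast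
      then obtain k where k: "s = t k" using rt by (metis rangeE)
      have "chr tau w (x k)"
      proof (cases k)
        case 0 then show ?thesis using s k x0 by simp
      next
        case (Suc m)
        then have "chr tau s (x k)" using step k by blast
        then show ?thesis using chr_trans[OF lms s(2)] by blast
      qed
      then show "w \<in> Ipast_set tau (range x)" unfolding mem_Ipast_set by blast
    qed
  qed
  then show ?thesis using fc by blast
qed

lemma IF_chain:
  assumes lms: "lorentzian_metric_space sig tau" and sep: "separable_lms tau" and IF: "IF tau P"
  shows "\<exists>x. past_chain tau x \<and> Ifut_set tau (range x) = P"
proof -
  obtain S where S: "countable S" "\<And>x y. chr tau x y \<Longrightarrow> \<exists>s\<in>S. chr tau x s \<and> chr tau s y"
    using sep unfolding separable_lms_def by blast
  have ps: "future_set tau P" using IF unfolding IF_def by blast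
  have dense: "\<exists>s\<in>S \<inter> P. chr tau s w" if "w \<in> P" for w
  proof -
    obtain a where a: "a \<in> P" "chr tau a w" using future_setD2[OF ps \<open>w \<in> P\<close>] by blast
    obtain s where s: "s \<in> S" "chr tau a s" "chr tau s w" using S(2)[OF a(2)] by blast
    have "s \<in> P" using future_setD1[OF ps a(1) s(2)] .
    then show ?thesis using s by blast
  qed
  obtain w0 where "w0 \<in> P" using IF unfolding IF_def by blast
  then have Tne: "S \<inter> P \<noteq> {}" using dense by blast
  have Tc: "countable (S \<inter> P)" using S(1) by simp
  define t where "t = from_nat_into (S \<inter> P)"
  have rt: "range t = S \<inter> P" unfolding t_def using range_from_nat_into[OF Tne Tc] .
  have tP: "t n \<in> P" for n using rt by blast
  define x where "x = rec_nat (t 0) (\<lambda>n xn. SOME w. w \<in> P \<and> chr tau w xn \<and> chr tau w (t (Suc n)))"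
  have x0: "x 0 = t 0" unfolding x_def by simp
  have xS: "x (Suc n) = (SOME w. w \<in> P \<and> chr tau w (x n) \<and> chr tau w (t (Suc n)))" for n
    unfolding x_def by simp
  have xP: "x n \<in> P" for n
  proof (induction n)
    case 0 then show ?case using x0 tP by simp
  next
    case (Suc n)
    have "\<exists>w. w \<in> P \<and> chr tau w (x n) \<and> chr tau w (t (Suc n))"
      using IF_directed[OF lms sep IF Suc.IH tP] by blast
    from someI_ex[OF this] show ?case unfolding xS by blast
  qed
  have step: "chr tau (x (Suc n)) (x n) \<and> chr tau (x (Suc n)) (t (Suc n))" for n
  proof -
    have "\<exists>w. w \<in> P \<and> chr tau w (x n) \<and> chr tau w (t (Suc n))"
      using IF_directed[OF lms sep IF xP tP] by blast
    from someI_ex[OF this] show ?thesis unfolding xS by blast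
  qed
  have fc: "past_chain tau x" unfolding past_chain_def using step by blast
  have "Ifut_set tau (range x) = P"
  proof
    show "Ifut_set tau (range x) \<subseteq> P"
    proof
      fix w assume "w \<in> Ifut_set tau (range x)"
      then obtain n where "chr tau (x n) w" unfolding mem_Ifut_set by blast
      then show "w \<in> P" using future_setD1[OF ps xP] by blast
    qed
    show "P \<subseteq> Ifut_set tau (range x)"
    proof
      fix w assume "w \<in> P"
      then obtain s where s: "s \<in> S \<inter> P" "chr tau s w" using dense by blast
      then obtain k where k: "s = t k" using rt by (metis rangeE)
      have "chr tau (x k) w"
      proof (cases k)
        case 0 then show ?thesis using s k x0 by simp
      next
        case (Suc m)
        then have "chr tau (x k) s" using step k by blast
        then show ?thesis using chr_trans[OF lms _ s(2)] by blast
      qed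
      then show "w \<in> Ifut_set tau (range x)" unfolding mem_Ifut_set by blast
    qed
  qed
  then show ?thesis using fc by blast
qed


lemma ctau_pos_iff:
  assumes lms: "lorentzian_metric_space sig tau" and sep: "separable_lms tau"
    and IFa: "IF tau (snd a)" and IPb: "IP tau (fst b)"
  shows "0 < ctau tau a b \<longleftrightarrow> (\<exists>u\<in>snd a. \<exists>v\<in>fst b. chr tau u v)"
proof -
  have ne: "snd a \<noteq> {}" "fst b \<noteq> {}" using IFa IPb unfolding IF_def IP_def by blast+
  define q where "q = (SOME q. past_chain tau q \<and> Ifut_set tau (range q) = snd a)"
  define p where "p = (SOME p. future_chain tau p \<and> Ipast_set tau (range p) = fst b)"
  have q: "past_chain tau q \<and> Ifut_set tau (range q) = snd a"
    unfolding q_def by (rule someI_ex[OF IF_chain[OF lms sep IFa]])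
  have p: "future_chain tau p \<and> Ipast_set tau (range p) = fst b"
    unfolding p_def by (rule someI_ex[OF IP_chain[OF lms sep IPb]])
  define f where "f = (\<lambda>n. tau (q n) (p n))"
  have ct: "ctau tau a b = lim f" unfolding ctau_def f_def q_def p_def Let_def using ne by simp
  have tri: "tau x y + tau y z \<le> tau x z" if "chr tau x y" "chr tau y z" for x y z
    using lms that unfolding lorentzian_metric_space_def chr_def by blast
  have inc: "f n \<le> f (Suc n)" for n
  proof (cases "chr tau (q n) (p n)")
    case False then show ?thesis unfolding f_def chr_def by simp
  next
    case True
    have c1: "chr tau (q (Suc n)) (q n)" using q unfolding past_chain_def by blast
    have c2: "chr tau (p n) (p (Suc n))" using p unfolding future_chain_def by blast
    have c3: "chr tau (q (Suc n)) (p n)" using chr_trans[OF lms c1 True] .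
    have "tau (q n) (p n) \<le> tau (q (Suc n)) (q n) + tau (q n) (p n)" by simp
    also have "\<dots> \<le> tau (q (Suc n)) (p n)" using tri[OF c1 True] .
    also have "\<dots> \<le> tau (q (Suc n)) (p n) + tau (p n) (p (Suc n))" by simp
    also have "\<dots> \<le> tau (q (Suc n)) (p (Suc n))" using tri[OF c3 c2] .
    finally show ?thesis unfolding f_def .
  qed
  have "incseq f" using inc by (simp add: incseq_SucI)
  then have "f \<longlonglongrightarrow> (SUP n. f n)" by (rule LIMSEQ_SUP)
  then have lf: "lim f = (SUP n. f n)" by (rule limI)
  show ?thesis
  proof
    assume "0 < ctau tau a b"
    then have "0 < (SUP n. f n)" using ct lf by simp
    then obtain n where n: "0 < f n" by (auto simp: less_SUP_iff)
    have "q n \<in> Ifut_set tau (range q)" using q by (intro pchain_mem) blast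
    then have "q n \<in> snd a" using q by simp
    moreover have "p n \<in> Ipast_set tau (range p)" using p by (intro fchain_mem) blast
    then have "p n \<in> fst b" using p by simp
    ultimately show "\<exists>u\<in>snd a. \<exists>v\<in>fst b. chr tau u v" using n unfolding f_def chr_def by blast
  next
    assume "\<exists>u\<in>snd a. \<exists>v\<in>fst b. chr tau u v"
    then obtain u v where uv: "u \<in> snd a" "v \<in> fst b" "chr tau u v" by blast
    have "u \<in> Ifut_set tau (range q)" using uv(1) q by simp
    then obtain m where m: "chr tau (q m) u" unfolding mem_Ifut_set by blast
    have "v \<in> Ipast_set tau (range p)" using uv(2) p by simp
    then obtain m' where m': "chr tau v (p m')" unfolding mem_Ipast_set by blast
    define N where "N = max m m'"
    have a1: "chr tau (q N) u" using pchain_le[OF lms conjunct1[OF q] _ m] unfolding N_def by simp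
    have a2: "chr tau v (p N)" using fchain_le[OF lms conjunct1[OF p] _ m'] unfolding N_def by simp
    have "chr tau (q N) (p N)" using chr_trans[OF lms chr_trans[OF lms a1 uv(3)] a2] .
    then have "0 < f N" unfolding f_def chr_def .
    also have "f N \<le> (SUP n. f n)" by (rule SUP_upper) simp
    finally show "0 < ctau tau a b" using ct lf by simp
  qed
qed

lemma S_rel_IP: "S_rel tau P F \<Longrightarrow> P \<noteq> {} \<Longrightarrow> IP tau P"
  unfolding S_rel_def S_rel_ne_def by blast

lemma S_rel_IF: "S_rel tau P F \<Longrightarrow> F \<noteq> {} \<Longrightarrow> IF tau F"
  unfolding S_rel_def S_rel_ne_def by blast

lemma S_rel_neI: "S_rel tau P F \<Longrightarrow> P \<noteq> {} \<Longrightarrow> F \<noteq> {} \<Longrightarrow> S_rel_ne tau P F"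
  unfolding S_rel_def by blast

lemma S_rel_ne_chr:
  assumes lms: "lorentzian_metric_space sig tau" and S: "S_rel_ne tau P F"
    and w: "w \<in> P" and f: "f \<in> F"
  shows "chr tau w f"
proof -
  have "P \<subseteq> common_past tau F" using S unfolding S_rel_ne_def maxIP_in_def by blast
  then have "w \<in> Ipast_set tau {p. \<forall>q\<in>F. chr tau p q}" using w unfolding common_past_def by blast
  then obtain a where a: "a \<in> {p. \<forall>q\<in>F. chr tau p q}" "chr tau w a" unfolding mem_Ipast_set by blast
  then have "chr tau a f" using f by blast
  then show ?thesis using chr_trans[OF lms a(2)] by blast
qed

lemma cX_S_rel: "c \<in> cX tau \<Longrightarrow> S_rel tau (fst c) (snd c)"
  unfolding cX_def by auto

lemma cchr_ne: "cchr tau a b \<Longrightarrow> snd a \<noteq> {} \<and> fst b \<noteq> {}"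
  unfolding cchr_def ctau_def by (auto split: if_splits)

lemma cchr_iff:
  assumes lms: "lorentzian_metric_space sig tau" and sep: "separable_lms tau"
    and a: "a \<in> cX tau" and b: "b \<in> cX tau"
  shows "cchr tau a b \<longleftrightarrow> snd a \<noteq> {} \<and> fst b \<noteq> {} \<and> (\<exists>u\<in>snd a. \<exists>v\<in>fst b. chr tau u v)"
proof (cases "snd a \<noteq> {} \<and> fst b \<noteq> {}")
  case True
  have i1: "IF tau (snd a)" using S_rel_IF[OF cX_S_rel[OF a]] True by blast
  have i2: "IP tau (fst b)" using S_rel_IP[OF cX_S_rel[OF b]] True by blast
  have "0 < ctau tau a b \<longleftrightarrow> (\<exists>u\<in>snd a. \<exists>v\<in>fst b. chr tau u v)" by (rule ctau_pos_iff[OF lms sep i1 i2])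
  then show ?thesis using True unfolding cchr_def by simp
next
  case False then show ?thesis using cchr_ne by blast
qed

lemma cchr_fst_mono:
  assumes lms: "lorentzian_metric_space sig tau" and sep: "separable_lms tau"
    and a: "a \<in> cX tau" and b: "b \<in> cX tau" and ab: "cchr tau a b"
  shows "fst a \<subseteq> fst b"
proof
  fix w assume w: "w \<in> fst a"
  obtain u v where uv: "u \<in> snd a" "v \<in> fst b" "chr tau u v" and ne: "snd a \<noteq> {}" "fst b \<noteq> {}"
    using cchr_iff[OF lms sep a b] ab by blast
  have S: "S_rel_ne tau (fst a) (snd a)" using S_rel_neI[OF cX_S_rel[OF a]] w ne by blast
  have "chr tau w u" using S_rel_ne_chr[OF lms S w uv(1)] .
  then have "chr tau w v" using chr_trans[OF lms _ uv(3)] by blast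
  moreover have "past_set tau (fst b)" using S_rel_IP[OF cX_S_rel[OF b] ne(2)] unfolding IP_def by blast
  ultimately show "w \<in> fst b" using past_setD1[of tau "fst b" v w] uv(2) by blast
qed

lemma cchr_snd_mono:
  assumes lms: "lorentzian_metric_space sig tau" and sep: "separable_lms tau"
    and b: "b \<in> cX tau" and c: "c \<in> cX tau" and bc: "cchr tau b c"
  shows "snd c \<subseteq> snd b"
proof
  fix f assume f: "f \<in> snd c"
  obtain u v where uv: "u \<in> snd b" "v \<in> fst c" "chr tau u v" and ne: "snd b \<noteq> {}" "fst c \<noteq> {}"
    using cchr_iff[OF lms sep b c] bc by blast
  have S: "S_rel_ne tau (fst c) (snd c)" using S_rel_neI[OF cX_S_rel[OF c]] f ne by blast
  have "chr tau v f" using S_rel_ne_chr[OF lms S uv(2) f] .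
  then have "chr tau u f" using chr_trans[OF lms uv(3)] by blast
  moreover have "future_set tau (snd b)" using S_rel_IF[OF cX_S_rel[OF b] ne(1)] unfolding IF_def by blast
  ultimately show "f \<in> snd b" using future_setD1[of tau "snd b" u f] uv(1) by blast
qed


lemma LI_subseq:
  assumes r: "strict_mono r"
  shows "LI A \<subseteq> LI (\<lambda>n. A (r n))"
proof
  fix x assume "x \<in> LI A"
  then obtain N where N: "\<forall>n\<ge>N. x \<in> A n" unfolding LI_def eventually_sequentially by blast
  have "\<forall>n\<ge>N. x \<in> A (r n)"
  proof (intro allI impI)
    fix n assume "N \<le> n"
    moreover have "n \<le> r n" using seq_suble[OF r] by blast
    ultimately show "x \<in> A (r n)" using N by simp
  qed
  then show "x \<in> LI (\<lambda>n. A (r n))" unfolding LI_def eventually_sequentially by blast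
qed

lemma LS_subseq:
  assumes r: "strict_mono r"
  shows "LS (\<lambda>n. A (r n)) \<subseteq> LS A"
proof
  fix x assume "x \<in> LS (\<lambda>n. A (r n))"
  then have H: "\<forall>N. \<exists>n\<ge>N. x \<in> A (r n)" unfolding LS_def frequently_sequentially by simp
  have "\<forall>N. \<exists>n\<ge>N. x \<in> A n"
  proof
    fix N
    obtain n where "n \<ge> N" "x \<in> A (r n)" using H by blast
    moreover have "n \<le> r n" using seq_suble[OF r] by blast
    ultimately show "\<exists>n\<ge>N. x \<in> A n" by (intro exI[of _ "r n"]) simp
  qed
  then show "x \<in> LS A" unfolding LS_def frequently_sequentially by simp
qed

lemma LI_LS: "LI A \<subseteq> LS A"
  unfolding LI_def LS_def using eventually_frequently[OF sequentially_bot] by blast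

lemma maxIP_mono: "maxIP_in tau P A \<Longrightarrow> P \<subseteq> B \<Longrightarrow> B \<subseteq> A \<Longrightarrow> maxIP_in tau P B"
  unfolding maxIP_in_def by blast

lemma maxIF_mono: "maxIF_in tau P A \<Longrightarrow> P \<subseteq> B \<Longrightarrow> B \<subseteq> A \<Longrightarrow> maxIF_in tau P B"
  unfolding maxIF_in_def by blast

lemma mem_chr_limits:
  "(P, F) \<in> chr_limits tau s \<longleftrightarrow> (P, F) \<in> cX tau \<and>
     (P \<noteq> {} \<longrightarrow> P \<subseteq> LI (\<lambda>n. fst (s n)) \<and> maxIP_in tau P (LS (\<lambda>n. fst (s n)))) \<and>
     (F \<noteq> {} \<longrightarrow> F \<subseteq> LI (\<lambda>n. snd (s n)) \<and> maxIF_in tau F (LS (\<lambda>n. snd (s n))))"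
  unfolding chr_limits_def by simp

lemma chr_limits_subseq:
  assumes r: "strict_mono r"
  shows "chr_limits tau s \<subseteq> chr_limits tau (\<lambda>n. s (r n))"
proof
  fix pf assume pf: "pf \<in> chr_limits tau s"
  obtain P F where pfe: "pf = (P, F)" by (cases pf)
  have "(P, F) \<in> chr_limits tau s" using pf pfe by simp
  then have cx: "(P, F) \<in> cX tau" and
    hP: "P \<noteq> {} \<longrightarrow> P \<subseteq> LI (\<lambda>n. fst (s n)) \<and> maxIP_in tau P (LS (\<lambda>n. fst (s n)))" and
    hF: "F \<noteq> {} \<longrightarrow> F \<subseteq> LI (\<lambda>n. snd (s n)) \<and> maxIF_in tau F (LS (\<lambda>n. snd (s n)))"
    unfolding mem_chr_limits by blast+
  have hP': "P \<subseteq> LI (\<lambda>n. fst (s (r n))) \<and> maxIP_in tau P (LS (\<lambda>n. fst (s (r n))))" if "P \<noteq> {}"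
  proof -
    have h: "P \<subseteq> LI (\<lambda>n. fst (s n))" "maxIP_in tau P (LS (\<lambda>n. fst (s n)))" using hP that by blast+
    have a: "P \<subseteq> LI (\<lambda>n. fst (s (r n)))" using h(1) LI_subseq[OF r, of "\<lambda>n. fst (s n)"] by simp
    have b: "P \<subseteq> LS (\<lambda>n. fst (s (r n)))" using a LI_LS by (rule order_trans)
    have c: "LS (\<lambda>n. fst (s (r n))) \<subseteq> LS (\<lambda>n. fst (s n))" using LS_subseq[OF r, of "\<lambda>n. fst (s n)"] by simp
    show ?thesis using a maxIP_mono[OF h(2) b c] by blast
  qed
  have hF': "F \<subseteq> LI (\<lambda>n. snd (s (r n))) \<and> maxIF_in tau F (LS (\<lambda>n. snd (s (r n))))" if "F \<noteq> {}"
  proof -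
    have h: "F \<subseteq> LI (\<lambda>n. snd (s n))" "maxIF_in tau F (LS (\<lambda>n. snd (s n)))" using hF that by blast+
    have a: "F \<subseteq> LI (\<lambda>n. snd (s (r n)))" using h(1) LI_subseq[OF r, of "\<lambda>n. snd (s n)"] by simp
    have b: "F \<subseteq> LS (\<lambda>n. snd (s (r n)))" using a LI_LS by (rule order_trans)
    have c: "LS (\<lambda>n. snd (s (r n))) \<subseteq> LS (\<lambda>n. snd (s n))" using LS_subseq[OF r, of "\<lambda>n. snd (s n)"] by simp
    show ?thesis using a maxIF_mono[OF h(2) b c] by blast
  qed
  have "(P, F) \<in> chr_limits tau (\<lambda>n. s (r n))"
    unfolding mem_chr_limits using cx hP' hF' by blast
  then show "pf \<in> chr_limits tau (\<lambda>n. s (r n))" using pfe by simp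
qed

lemma chr_closedD: "chr_closed tau C \<Longrightarrow> (\<And>n. s n \<in> C) \<Longrightarrow> chr_limits tau s \<subseteq> C"
  unfolding chr_closed_def by blast

lemma chr_closedI: "C \<subseteq> cX tau \<Longrightarrow> (\<And>s. (\<And>n. s n \<in> C) \<Longrightarrow> chr_limits tau s \<subseteq> C) \<Longrightarrow> chr_closed tau C"
  unfolding chr_closed_def by blast

lemma chr_closed_sub: "chr_closed tau C \<Longrightarrow> C \<subseteq> cX tau"
  unfolding chr_closed_def by blast

lemma chr_closed_sub_seq:
  fixes s :: "nat \<Rightarrow> 'a set \<times> 'a set"
  assumes C: "chr_closed tau C" and inf: "infinite {n. s n \<in> C}"
  shows "chr_limits tau s \<subseteq> C"
proof -
  obtain r :: "nat \<Rightarrow> nat" where r: "strict_mono r" "\<forall>n. r n \<in> {n. s n \<in> C}"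
    using infinite_enumerate[OF inf] by blast
  have "s (r n) \<in> C" for n using r(2) by simp
  then have "chr_limits tau (\<lambda>n. s (r n)) \<subseteq> C" by (rule chr_closedD[OF C])
  then show ?thesis using chr_limits_subseq[OF r(1), of tau s] by (rule order_trans[rotated])
qed

lemma chr_closed_Un:
  assumes A: "chr_closed tau A" and B: "chr_closed tau B"
  shows "chr_closed tau (A \<union> B)"
proof (rule chr_closedI)
  show "A \<union> B \<subseteq> cX tau" using chr_closed_sub[OF A] chr_closed_sub[OF B] by blast
next
  fix s :: "nat \<Rightarrow> 'a set \<times> 'a set" assume s: "\<And>n. s n \<in> A \<union> B"
  have "{n. s n \<in> A} \<union> {n. s n \<in> B} = UNIV" using s by blast
  then have "infinite ({n. s n \<in> A} \<union> {n. s n \<in> B})" using infinite_UNIV_nat by simp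
  then have "infinite {n. s n \<in> A} \<or> infinite {n. s n \<in> B}" by simp
  then show "chr_limits tau s \<subseteq> A \<union> B"
  proof
    assume "infinite {n. s n \<in> A}"
    then have "chr_limits tau s \<subseteq> A" by (rule chr_closed_sub_seq[OF A])
    then show ?thesis by blast
  next
    assume "infinite {n. s n \<in> B}"
    then have "chr_limits tau s \<subseteq> B" by (rule chr_closed_sub_seq[OF B])
    then show ?thesis by blast
  qed
qed

lemma chr_limits_cX: "chr_limits tau s \<subseteq> cX tau"
  unfolding chr_limits_def by auto

lemma istop_sigma: "istopology (\<lambda>U. U \<subseteq> cX tau \<and> chr_closed tau (cX tau - U))"
proof -
  define L where "L = (\<lambda>U. U \<subseteq> cX tau \<and> chr_closed tau (cX tau - U))"
  have I: "L (S \<inter> T)" if S: "L S" and T: "L T" for S T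
  proof -
    have S': "S \<subseteq> cX tau" "chr_closed tau (cX tau - S)" using S unfolding L_def by blast+
    have T': "T \<subseteq> cX tau" "chr_closed tau (cX tau - T)" using T unfolding L_def by blast+
    have e: "cX tau - S \<inter> T = (cX tau - S) \<union> (cX tau - T)" by blast
    have "chr_closed tau (cX tau - S \<inter> T)" unfolding e by (rule chr_closed_Un[OF S'(2) T'(2)])
    then show ?thesis unfolding L_def using S'(1) by blast
  qed
  have U: "L (\<Union>K)" if K: "\<forall>U\<in>K. L U" for K
  proof -
    have "chr_closed tau (cX tau - \<Union>K)"
    proof (rule chr_closedI)
      show "cX tau - \<Union>K \<subseteq> cX tau" by blast
    next
      fix s :: "nat \<Rightarrow> 'a set \<times> 'a set" assume s: "\<And>n. s n \<in> cX tau - \<Union>K"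
      have "chr_limits tau s \<subseteq> cX tau - U" if "U \<in> K" for U
      proof -
        have "chr_closed tau (cX tau - U)" using K that unfolding L_def by blast
        moreover have "s n \<in> cX tau - U" for n using s[of n] that by blast
        ultimately show ?thesis using chr_closedD by blast
      qed
      then show "chr_limits tau s \<subseteq> cX tau - \<Union>K" using chr_limits_cX[of tau s] by blast
    qed
    moreover have "\<Union>K \<subseteq> cX tau" using K unfolding L_def by blast
    ultimately show ?thesis unfolding L_def by blast
  qed
  have "istopology L" unfolding istopology_def using I U by blast
  then show ?thesis unfolding L_def .
qed

lemma openin_sigma: "openin (sigma_chr tau) U \<longleftrightarrow> U \<subseteq> cX tau \<and> chr_closed tau (cX tau - U)"
proof -
  have "openin (sigma_chr tau) = (\<lambda>U. U \<subseteq> cX tau \<and> chr_closed tau (cX tau - U))"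
    unfolding sigma_chr_def by (rule topology_inverse'[OF istop_sigma])
  then show ?thesis by simp
qed



lemma open_Ifut:
  assumes lms: "lorentzian_metric_space sig tau"
  shows "openin sig {v. chr tau w v}"
proof -
  have top: "topspace sig = UNIV" using lms unfolding lorentzian_metric_space_def by blast
  have o: "openin (prod_topology sig sig) {z. 0 < tau (fst z) (snd z)}"
    using lms unfolding lorentzian_metric_space_def by blast
  have cm: "continuous_map sig (prod_topology sig sig) (\<lambda>v. (w, v))"
    by (intro continuous_map_pairedI) (auto simp: top)
  have "openin sig {v \<in> topspace sig. (w, v) \<in> {z. 0 < tau (fst z) (snd z)}}"
    by (rule openin_continuous_map_preimage[OF cm o])
  then show ?thesis unfolding top chr_def by simp
qed

lemma open_Ipast:
  assumes lms: "lorentzian_metric_space sig tau"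
  shows "openin sig {u. chr tau u v}"
proof -
  have top: "topspace sig = UNIV" using lms unfolding lorentzian_metric_space_def by blast
  have o: "openin (prod_topology sig sig) {z. 0 < tau (fst z) (snd z)}"
    using lms unfolding lorentzian_metric_space_def by blast
  have cm: "continuous_map sig (prod_topology sig sig) (\<lambda>u. (u, v))"
    by (intro continuous_map_pairedI) (auto simp: top)
  have "openin sig {u \<in> topspace sig. (u, v) \<in> {z. 0 < tau (fst z) (snd z)}}"
    by (rule openin_continuous_map_preimage[OF cm o])
  then show ?thesis unfolding top chr_def by simp
qed

lemma cluster_point:
  assumes K: "compactin X K" and xK: "\<And>n. x n \<in> K"
  shows "\<exists>z\<in>K. \<forall>U. openin X U \<and> z \<in> U \<longrightarrow> (\<exists>\<^sub>F n in sequentially. x n \<in> U)"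
proof (rule ccontr)
  assume nt: "\<not> ?thesis"
  define \<U> where "\<U> = {U. openin X U \<and> eventually (\<lambda>n. x n \<notin> U) sequentially}"
  have cov: "K \<subseteq> \<Union>\<U>"
  proof
    fix z assume z: "z \<in> K"
    have "\<not> (\<forall>U. openin X U \<and> z \<in> U \<longrightarrow> (\<exists>\<^sub>F n in sequentially. x n \<in> U))"
      using nt z by blast
    then obtain U where U: "openin X U" "z \<in> U" "\<not> (\<exists>\<^sub>F n in sequentially. x n \<in> U)"
      by blast
    then have "eventually (\<lambda>n. x n \<notin> U) sequentially" by (simp add: not_frequently)
    then have "U \<in> \<U>" unfolding \<U>_def using U(1) by blast
    then show "z \<in> \<Union>\<U>" using U(2) by blast
  qed
  have op: "\<forall>U\<in>\<U>. openin X U" unfolding \<U>_def by blast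
  have "\<forall>\<U>. (\<forall>U\<in>\<U>. openin X U) \<and> K \<subseteq> \<Union>\<U> \<longrightarrow> (\<exists>\<F>. finite \<F> \<and> \<F> \<subseteq> \<U> \<and> K \<subseteq> \<Union>\<F>)"
    using K unfolding compactin_def by (elim conjE)
  then have "\<exists>\<F>. finite \<F> \<and> \<F> \<subseteq> \<U> \<and> K \<subseteq> \<Union>\<F>" using op cov by blast
  then obtain \<F> where F: "finite \<F>" "\<F> \<subseteq> \<U>" "K \<subseteq> \<Union>\<F>" by blast
  have "\<forall>U\<in>\<F>. eventually (\<lambda>n. x n \<notin> U) sequentially" using F(2) unfolding \<U>_def by blast
  then have ev: "eventually (\<lambda>n. \<forall>U\<in>\<F>. x n \<notin> U) sequentially"
    by (rule eventually_ball_finite[OF F(1)])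
  have nn: "\<And>n. (\<forall>U\<in>\<F>. x n \<notin> U) \<Longrightarrow> False" using xK F(3) by blast
  have "eventually (\<lambda>n. False) sequentially" using ev nn by (rule eventually_mono)
  then show False by simp
qed

lemma bounded_fchain_PIP:
  assumes lms: "lorentzian_metric_space sig tau" and full: "full tau" and Sp: "S_property tau"
    and gh: "globally_hyperbolic sig tau le"
    and c: "future_chain tau x" and bd: "\<And>n. chr tau (x n) y" and IP: "IP tau (Ipast_set tau (range x))"
  shows "\<exists>z. Ipast_set tau (range x) = Ipast tau z"
proof -
  define P where "P = Ipast_set tau (range x)"
  have cc: "compatible_causal tau le" using gh unfolding globally_hyperbolic_def by blast
  have le_refl: "le a a" for a using cc unfolding compatible_causal_def by blast
  have le_chr: "chr tau a b \<Longrightarrow> le a b" for a b using cc unfolding compatible_causal_def by blast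
  have K: "compactin sig (Jdiamond le (x 0) y)" using gh unfolding globally_hyperbolic_def by blast
  have xK: "x n \<in> Jdiamond le (x 0) y" for n
  proof -
    have "le (x 0) (x n)"
    proof (cases n)
      case 0 then show ?thesis using le_refl by simp
    next
      case (Suc m)
      then have "0 < n" by simp
      then show ?thesis by (intro le_chr fchain_lt[OF lms c])
    qed
    then show ?thesis unfolding Jdiamond_def using le_chr[OF bd] by blast
  qed
  obtain z where z0: "\<forall>U. openin sig U \<and> z \<in> U \<longrightarrow> (\<exists>\<^sub>F n in sequentially. x n \<in> U)"
    using cluster_point[of sig _ x, OF K xK] by (elim bexE) blast
  have z: "\<exists>\<^sub>F n in sequentially. x n \<in> U" if "openin sig U" "z \<in> U" for U
    using z0 that by blast
  have sub1: "Ipast tau z \<subseteq> P"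
  proof
    fix v assume "v \<in> Ipast tau z"
    then have "chr tau v z" unfolding Ipast_def by simp
    then have "\<exists>\<^sub>F n in sequentially. x n \<in> {u. chr tau v u}" using z[OF open_Ifut[OF lms]] by simp
    then have "\<exists>n. x n \<in> {u. chr tau v u}" by (rule frequently_ex)
    then obtain n where "chr tau v (x n)" by blast
    then show "v \<in> P" unfolding P_def mem_Ipast_set by blast
  qed
  have sub2: "Ifut tau z \<subseteq> {p. \<forall>w\<in>P. chr tau w p}"
  proof
    fix v assume "v \<in> Ifut tau z"
    then have "chr tau z v" unfolding Ifut_def by simp
    then have fr: "\<exists>\<^sub>F n in sequentially. x n \<in> {u. chr tau u v}" using z[OF open_Ipast[OF lms]] by simp
    have "chr tau w v" if w: "w \<in> P" for w
    proof -
      obtain m where m: "chr tau w (x m)" using w unfolding P_def mem_Ipast_set by blast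
      have "\<forall>N. \<exists>n\<ge>N. x n \<in> {u. chr tau u v}" using fr unfolding frequently_sequentially .
      then obtain n where n: "n \<ge> m" "chr tau (x n) v" by blast
      have "chr tau w (x n)" using fchain_le[OF lms c n(1) m] .
      then show ?thesis using chr_trans[OF lms _ n(2)] by blast
    qed
    then show "v \<in> {p. \<forall>w\<in>P. chr tau w p}" by blast
  qed
  have ne: "Ipast tau z \<noteq> {}" "Ifut tau z \<noteq> {}" using full unfolding full_def by blast+
  have "S_rel tau (Ipast tau z) (Ifut tau z)" using Sp unfolding S_property_def by blast
  then have "S_rel_ne tau (Ipast tau z) (Ifut tau z)" using ne by (rule S_rel_neI)
  then have mx: "maxIP_in tau (Ipast tau z) (common_past tau (Ifut tau z))"
    unfolding S_rel_ne_def by blast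
  have psP: "past_set tau P" using IP unfolding P_def IP_def by blast
  have "P \<subseteq> common_past tau (Ifut tau z)"
  proof
    fix w assume w: "w \<in> P"
    obtain a where a: "a \<in> P" "chr tau w a" using past_setD2[OF psP w] by blast
    have "a \<in> {p. \<forall>q\<in>Ifut tau z. chr tau p q}" using sub2 a(1) by blast
    then show "w \<in> common_past tau (Ifut tau z)" unfolding common_past_def mem_Ipast_set using a(2) by blast
  qed
  moreover have "IP tau P" using IP unfolding P_def .
  ultimately have "P = Ipast tau z" using mx sub1 unfolding maxIP_in_def by blast
  then show ?thesis unfolding P_def by blast
qed

lemma bounded_pchain_PIF:
  assumes lms: "lorentzian_metric_space sig tau" and full: "full tau" and Sp: "S_property tau"
    and gh: "globally_hyperbolic sig tau le"
    and c: "past_chain tau x" and bd: "\<And>n. chr tau y (x n)" and IF: "IF tau (Ifut_set tau (range x))"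
  shows "\<exists>z. Ifut_set tau (range x) = Ifut tau z"
proof -
  define P where "P = Ifut_set tau (range x)"
  have cc: "compatible_causal tau le" using gh unfolding globally_hyperbolic_def by blast
  have le_refl: "le a a" for a using cc unfolding compatible_causal_def by blast
  have le_chr: "chr tau a b \<Longrightarrow> le a b" for a b using cc unfolding compatible_causal_def by blast
  have K: "compactin sig (Jdiamond le y (x 0))" using gh unfolding globally_hyperbolic_def by blast
  have xK: "x n \<in> Jdiamond le y (x 0)" for n
  proof -
    have "le (x n) (x 0)"
    proof (cases n)
      case 0 then show ?thesis using le_refl by simp
    next
      case (Suc m)
      then have "0 < n" by simp
      then show ?thesis by (intro le_chr pchain_lt[OF lms c])
    qed
    then show ?thesis unfolding Jdiamond_def using le_chr[OF bd] by blast
  qed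
  obtain z where z0: "\<forall>U. openin sig U \<and> z \<in> U \<longrightarrow> (\<exists>\<^sub>F n in sequentially. x n \<in> U)"
    using cluster_point[of sig _ x, OF K xK] by (elim bexE) blast
  have z: "\<exists>\<^sub>F n in sequentially. x n \<in> U" if "openin sig U" "z \<in> U" for U
    using z0 that by blast
  have sub1: "Ifut tau z \<subseteq> P"
  proof
    fix v assume "v \<in> Ifut tau z"
    then have "chr tau z v" unfolding Ifut_def by simp
    then have "\<exists>\<^sub>F n in sequentially. x n \<in> {u. chr tau u v}" using z[OF open_Ipast[OF lms]] by simp
    then have "\<exists>n. x n \<in> {u. chr tau u v}" by (rule frequently_ex)
    then obtain n where "chr tau (x n) v" by blast
    then show "v \<in> P" unfolding P_def mem_Ifut_set by blast
  qed
  have sub2: "Ipast tau z \<subseteq> {p. \<forall>w\<in>P. chr tau p w}"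
  proof
    fix v assume "v \<in> Ipast tau z"
    then have "chr tau v z" unfolding Ipast_def by simp
    then have fr: "\<exists>\<^sub>F n in sequentially. x n \<in> {u. chr tau v u}" using z[OF open_Ifut[OF lms]] by simp
    have "chr tau v w" if w: "w \<in> P" for w
    proof -
      obtain m where m: "chr tau (x m) w" using w unfolding P_def mem_Ifut_set by blast
      have "\<forall>N. \<exists>n\<ge>N. x n \<in> {u. chr tau v u}" using fr unfolding frequently_sequentially .
      then obtain n where n: "n \<ge> m" "chr tau v (x n)" by blast
      have "chr tau (x n) w" using pchain_le[OF lms c n(1) m] .
      then show ?thesis using chr_trans[OF lms n(2)] by blast
    qed
    then show "v \<in> {p. \<forall>w\<in>P. chr tau p w}" by blast
  qed
  have ne: "Ipast tau z \<noteq> {}" "Ifut tau z \<noteq> {}" using full unfolding full_def by blast+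
  have "S_rel tau (Ipast tau z) (Ifut tau z)" using Sp unfolding S_property_def by blast
  then have "S_rel_ne tau (Ipast tau z) (Ifut tau z)" using ne by (rule S_rel_neI)
  then have mx: "maxIF_in tau (Ifut tau z) (common_future tau (Ipast tau z))"
    unfolding S_rel_ne_def by blast
  have psP: "future_set tau P" using IF unfolding P_def IF_def by blast
  have "P \<subseteq> common_future tau (Ipast tau z)"
  proof
    fix w assume w: "w \<in> P"
    obtain a where a: "a \<in> P" "chr tau a w" using future_setD2[OF psP w] by blast
    have "a \<in> {p. \<forall>q\<in>Ipast tau z. chr tau q p}" using sub2 a(1) by blast
    then show "w \<in> common_future tau (Ipast tau z)" unfolding common_future_def mem_Ifut_set using a(2) by blast
  qed
  moreover have "IF tau P" using IF unfolding P_def .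
  ultimately have "P = Ifut tau z" using mx sub1 unfolding maxIF_in_def by blast
  then show ?thesis unfolding P_def by blast
qed



lemma not_cinj_F: "full tau \<Longrightarrow> (Q, {}) \<notin> range (cinj tau)"
proof
  assume f: "full tau" and "(Q, {}) \<in> range (cinj tau)"
  then obtain w where "(Q, {}) = cinj tau w" by blast
  then have "Ifut tau w = {}" unfolding cinj_def by simp
  then show False using f unfolding full_def by blast
qed

lemma not_cinj_P: "full tau \<Longrightarrow> ({}, Q) \<notin> range (cinj tau)"
proof
  assume f: "full tau" and "({}, Q) \<in> range (cinj tau)"
  then obtain w where "({}, Q) = cinj tau w" by blast
  then have "Ipast tau w = {}" unfolding cinj_def by simp
  then show False using f unfolding full_def by blast
qed

lemma P_boundary_max:
  assumes lms: "lorentzian_metric_space sig tau" and full: "full tau" and sep: "separable_lms tau"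
    and Sp: "S_property tau" and gh: "globally_hyperbolic sig tau le"
    and bd: "\<forall>a\<in>cboundary tau. \<forall>b\<in>cboundary tau. cle tau a b \<longrightarrow> a = b"
    and p: "(P, {}) \<in> cX tau" and Pne: "P \<noteq> {}" and IP': "IP tau P'" and sub: "P \<subseteq> P'"
  shows "P' = P"
proof (rule ccontr)
  assume neq: "P' \<noteq> P"
  have SP: "S_rel tau P {}" using p unfolding cX_def by simp
  have noF: "\<not> (\<exists>F'. F' \<noteq> {} \<and> S_rel_ne tau P F')" using SP Pne unfolding S_rel_def by blast
  have IPP: "IP tau P" using S_rel_IP[OF SP Pne] .
  show False
  proof (cases "\<exists>F'. F' \<noteq> {} \<and> S_rel_ne tau P' F'")
    case True
    then obtain F' y where F': "S_rel_ne tau P' F'" "y \<in> F'" by blast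
    obtain x where x: "future_chain tau x" "Ipast_set tau (range x) = P"
      using IP_chain[OF lms sep IPP] by blast
    have bd2: "chr tau (x n) y" for n
    proof -
      have "x n \<in> Ipast_set tau (range x)" by (rule fchain_mem[OF x(1)])
      then have "x n \<in> P'" using x(2) sub by blast
      then show ?thesis using S_rel_ne_chr[OF lms F'(1) _ F'(2)] by blast
    qed
    have "IP tau (Ipast_set tau (range x))" using IPP x(2) by simp
    then obtain z where z: "Ipast_set tau (range x) = Ipast tau z"
      using bounded_fchain_PIP[OF lms full Sp gh x(1) bd2] by blast
    have ne: "Ipast tau z \<noteq> {}" "Ifut tau z \<noteq> {}" using full unfolding full_def by blast+
    have "S_rel tau (Ipast tau z) (Ifut tau z)" using Sp unfolding S_property_def by blast
    then have "S_rel_ne tau (Ipast tau z) (Ifut tau z)" using ne by (rule S_rel_neI)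
    then have "S_rel_ne tau P (Ifut tau z)" using z x(2) by simp
    then show False using noF ne(2) by blast
  next
    case False
    have P'ne: "P' \<noteq> {}" using sub Pne by blast
    have "S_rel tau P' {}" unfolding S_rel_def using False IP' P'ne by blast
    then have q: "(P', {}) \<in> cX tau" unfolding cX_def by simp
    have pb: "(P, {}) \<in> cboundary tau" using p not_cinj_F[OF full] unfolding cboundary_def by blast
    have qb: "(P', {}) \<in> cboundary tau" using q not_cinj_F[OF full] unfolding cboundary_def by blast
    have c1: "cIpast tau (P, {}) \<subseteq> cIpast tau (P', {})"
    proof
      fix b assume "b \<in> cIpast tau (P, {})"
      then have b: "b \<in> cX tau" "cchr tau b (P, {})" unfolding cIpast_def by blast+
      then have "snd b \<noteq> {} \<and> (\<exists>u\<in>snd b. \<exists>v\<in>P. chr tau u v)"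
        using cchr_iff[OF lms sep b(1) p] by simp
      then obtain u v where uv: "u \<in> snd b" "v \<in> P" "chr tau u v" "snd b \<noteq> {}" by blast
      have "v \<in> P'" using uv(2) sub by blast
      then have "cchr tau b (P', {})" using cchr_iff[OF lms sep b(1) q] uv P'ne by auto
      then show "b \<in> cIpast tau (P', {})" unfolding cIpast_def using b(1) by blast
    qed
    have "cIfut tau (P', {}) = {}" unfolding cIfut_def using cchr_ne[of tau "(P', {})"] by auto
    then have "cle tau (P, {}) (P', {})" unfolding cle_def using c1 by blast
    then have "(P, {}) = (P', {})" using bd pb qb by blast
    then show False using neq by simp
  qed
qed

lemma F_boundary_max:
  assumes lms: "lorentzian_metric_space sig tau" and full: "full tau" and sep: "separable_lms tau"
    and Sp: "S_property tau" and gh: "globally_hyperbolic sig tau le"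
    and bd: "\<forall>a\<in>cboundary tau. \<forall>b\<in>cboundary tau. cle tau a b \<longrightarrow> a = b"
    and p: "({}, F) \<in> cX tau" and Fne: "F \<noteq> {}" and IF': "IF tau F'" and sub: "F \<subseteq> F'"
  shows "F' = F"
proof (rule ccontr)
  assume neq: "F' \<noteq> F"
  have SP: "S_rel tau {} F" using p unfolding cX_def by simp
  have noP: "\<not> (\<exists>P'. P' \<noteq> {} \<and> S_rel_ne tau P' F)" using SP Fne unfolding S_rel_def by blast
  have IFF: "IF tau F" using S_rel_IF[OF SP Fne] .
  show False
  proof (cases "\<exists>P'. P' \<noteq> {} \<and> S_rel_ne tau P' F'")
    case True
    then obtain P' w where P': "S_rel_ne tau P' F'" "w \<in> P'" by blast
    obtain x where x: "past_chain tau x" "Ifut_set tau (range x) = F"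
      using IF_chain[OF lms sep IFF] by blast
    have bd2: "chr tau w (x n)" for n
    proof -
      have "x n \<in> Ifut_set tau (range x)" by (rule pchain_mem[OF x(1)])
      then have "x n \<in> F'" using x(2) sub by blast
      then show ?thesis using S_rel_ne_chr[OF lms P'(1) P'(2)] by blast
    qed
    have "IF tau (Ifut_set tau (range x))" using IFF x(2) by simp
    then obtain z where z: "Ifut_set tau (range x) = Ifut tau z"
      using bounded_pchain_PIF[OF lms full Sp gh x(1) bd2] by blast
    have ne: "Ipast tau z \<noteq> {}" "Ifut tau z \<noteq> {}" using full unfolding full_def by blast+
    have "S_rel tau (Ipast tau z) (Ifut tau z)" using Sp unfolding S_property_def by blast
    then have "S_rel_ne tau (Ipast tau z) (Ifut tau z)" using ne by (rule S_rel_neI)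
    then have "S_rel_ne tau (Ipast tau z) F" using z x(2) by simp
    then show False using noP ne(1) by blast
  next
    case False
    have F'ne: "F' \<noteq> {}" using sub Fne by blast
    have "S_rel tau {} F'" unfolding S_rel_def using False IF' F'ne by blast
    then have q: "({}, F') \<in> cX tau" unfolding cX_def by simp
    have pb: "({}, F) \<in> cboundary tau" using p not_cinj_P[OF full] unfolding cboundary_def by blast
    have qb: "({}, F') \<in> cboundary tau" using q not_cinj_P[OF full] unfolding cboundary_def by blast
    have c1: "cIfut tau ({}, F) \<subseteq> cIfut tau ({}, F')"
    proof
      fix b assume "b \<in> cIfut tau ({}, F)"
      then have b: "b \<in> cX tau" "cchr tau ({}, F) b" unfolding cIfut_def by blast+
      then have "fst b \<noteq> {} \<and> (\<exists>u\<in>F. \<exists>v\<in>fst b. chr tau u v)"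
        using cchr_iff[OF lms sep p b(1)] by simp
      then obtain u v where uv: "u \<in> F" "v \<in> fst b" "chr tau u v" "fst b \<noteq> {}" by blast
      have "u \<in> F'" using uv(1) sub by blast
      then have "cchr tau ({}, F') b" using cchr_iff[OF lms sep q b(1)] uv F'ne by auto
      then show "b \<in> cIfut tau ({}, F')" unfolding cIfut_def using b(1) by blast
    qed
    have "cIpast tau ({}, F') = {}" unfolding cIpast_def using cchr_ne[of tau _ "({}, F')"] by auto
    then have "cle tau ({}, F') ({}, F)" unfolding cle_def using c1 by blast
    then have "({}, F') = ({}, F)" using bd pb qb by blast
    then show False using neq by simp
  qed
qed



lemma P_limit:
  assumes lms: "lorentzian_metric_space sig tau" and full: "full tau" and sep: "separable_lms tau"
    and Sp: "S_property tau" and gh: "globally_hyperbolic sig tau le"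
    and bd: "\<forall>a\<in>cboundary tau. \<forall>b\<in>cboundary tau. cle tau a b \<longrightarrow> a = b"
    and p: "(P, F) \<in> cX tau" and Pne: "P \<noteq> {}"
    and x: "future_chain tau x" "Ipast_set tau (range x) = P"
    and b: "\<And>n. b n \<in> cX tau" and xb: "\<And>n. x n \<in> fst (b n)"
    and yF: "F \<noteq> {} \<Longrightarrow> past_chain tau y \<and> Ifut_set tau (range y) = F \<and> (\<forall>n. y n \<in> snd (b n))"
  shows "P \<subseteq> LI (\<lambda>n. fst (b n)) \<and> maxIP_in tau P (LS (\<lambda>n. fst (b n)))"
proof -
  have SP: "S_rel tau P F" using p unfolding cX_def by simp
  have IPP: "IP tau P" using S_rel_IP[OF SP Pne] .
  have psb: "past_set tau (fst (b n))" for n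
  proof -
    have "fst (b n) \<noteq> {}" using xb[of n] by blast
    then show ?thesis using S_rel_IP[OF cX_S_rel[OF b]] unfolding IP_def by blast
  qed
  have LI: "P \<subseteq> LI (\<lambda>n. fst (b n))"
  proof
    fix w assume "w \<in> P"
    then have "w \<in> Ipast_set tau (range x)" using x(2) by simp
    then obtain m where m: "chr tau w (x m)" unfolding mem_Ipast_set by blast
    have "\<forall>n\<ge>m. w \<in> fst (b n)"
    proof (intro allI impI)
      fix n assume "m \<le> n"
      then have "chr tau w (x n)" using fchain_le[OF lms x(1) _ m] by blast
      then show "w \<in> fst (b n)" using past_setD1[OF psb xb] by blast
    qed
    then show "w \<in> LI (\<lambda>n. fst (b n))" unfolding LI_def eventually_sequentially by blast
  qed
  have PLS: "P \<subseteq> LS (\<lambda>n. fst (b n))" using LI LI_LS by (rule order_trans)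
  have mx: "P' = P" if IP': "IP tau P'" and s1: "P \<subseteq> P'" and s2: "P' \<subseteq> LS (\<lambda>n. fst (b n))" for P'
  proof (cases "F = {}")
    case True
    then have "(P, {}) \<in> cX tau" using p by simp
    then show ?thesis using P_boundary_max[OF lms full sep Sp gh bd _ Pne IP' s1] by blast
  next
    case False
    have y: "past_chain tau y" "Ifut_set tau (range y) = F" "\<And>n. y n \<in> snd (b n)" using yF[OF False] by blast+
    have Sne: "S_rel_ne tau P F" using S_rel_neI[OF SP Pne False] .
    then have mxc: "maxIP_in tau P (common_past tau F)" unfolding S_rel_ne_def by blast
    have psP': "past_set tau P'" using IP' unfolding IP_def by blast
    have "P' \<subseteq> common_past tau F"
    proof
      fix w assume w: "w \<in> P'"
      obtain a where a: "a \<in> P'" "chr tau w a" using past_setD2[OF psP' w] by blast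
      have fr: "\<forall>N. \<exists>n\<ge>N. a \<in> fst (b n)" using s2 a(1) unfolding LS_def frequently_sequentially by blast
      have "chr tau a f" if f: "f \<in> F" for f
      proof -
        have "f \<in> Ifut_set tau (range y)" using f y(2) by simp
        then obtain m where m: "chr tau (y m) f" unfolding mem_Ifut_set by blast
        obtain n where n: "n \<ge> m" "a \<in> fst (b n)" using fr by blast
        have "S_rel_ne tau (fst (b n)) (snd (b n))"
          using S_rel_neI[OF cX_S_rel[OF b]] n(2) y(3)[of n] by blast
        then have "chr tau a (y n)" using S_rel_ne_chr[OF lms _ n(2) y(3)] by blast
        moreover have "chr tau (y n) f" using pchain_le[OF lms y(1) n(1) m] .
        ultimately show ?thesis using chr_trans[OF lms] by blast
      qed
      then have "a \<in> {p. \<forall>q\<in>F. chr tau p q}" by blast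
      then show "w \<in> common_past tau F" unfolding common_past_def mem_Ipast_set using a(2) by blast
    qed
    then show ?thesis using mxc IP' s1 unfolding maxIP_in_def by blast
  qed
  have "maxIP_in tau P (LS (\<lambda>n. fst (b n)))" unfolding maxIP_in_def using IPP PLS mx by blast
  then show ?thesis using LI by blast
qed

lemma F_limit:
  assumes lms: "lorentzian_metric_space sig tau" and full: "full tau" and sep: "separable_lms tau"
    and Sp: "S_property tau" and gh: "globally_hyperbolic sig tau le"
    and bd: "\<forall>a\<in>cboundary tau. \<forall>b\<in>cboundary tau. cle tau a b \<longrightarrow> a = b"
    and p: "(P, F) \<in> cX tau" and Fne: "F \<noteq> {}"
    and y: "past_chain tau y" "Ifut_set tau (range y) = F"
    and b: "\<And>n. b n \<in> cX tau" and yb: "\<And>n. y n \<in> snd (b n)"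
    and xP: "P \<noteq> {} \<Longrightarrow> future_chain tau x \<and> Ipast_set tau (range x) = P \<and> (\<forall>n. x n \<in> fst (b n))"
  shows "F \<subseteq> LI (\<lambda>n. snd (b n)) \<and> maxIF_in tau F (LS (\<lambda>n. snd (b n)))"
proof -
  have SP: "S_rel tau P F" using p unfolding cX_def by simp
  have IFF: "IF tau F" using S_rel_IF[OF SP Fne] .
  have psb: "future_set tau (snd (b n))" for n
  proof -
    have "snd (b n) \<noteq> {}" using yb[of n] by blast
    then show ?thesis using S_rel_IF[OF cX_S_rel[OF b]] unfolding IF_def by blast
  qed
  have LI: "F \<subseteq> LI (\<lambda>n. snd (b n))"
  proof
    fix w assume "w \<in> F"
    then have "w \<in> Ifut_set tau (range y)" using y(2) by simp
    then obtain m where m: "chr tau (y m) w" unfolding mem_Ifut_set by blast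
    have "\<forall>n\<ge>m. w \<in> snd (b n)"
    proof (intro allI impI)
      fix n assume "m \<le> n"
      then have "chr tau (y n) w" using pchain_le[OF lms y(1) _ m] by blast
      then show "w \<in> snd (b n)" using future_setD1[OF psb yb] by blast
    qed
    then show "w \<in> LI (\<lambda>n. snd (b n))" unfolding LI_def eventually_sequentially by blast
  qed
  have FLS: "F \<subseteq> LS (\<lambda>n. snd (b n))" using LI LI_LS by (rule order_trans)
  have mx: "F' = F" if IF': "IF tau F'" and s1: "F \<subseteq> F'" and s2: "F' \<subseteq> LS (\<lambda>n. snd (b n))" for F'
  proof (cases "P = {}")
    case True
    then have "({}, F) \<in> cX tau" using p by simp
    then show ?thesis using F_boundary_max[OF lms full sep Sp gh bd _ Fne IF' s1] by blast
  next
    case False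
    have x: "future_chain tau x" "Ipast_set tau (range x) = P" "\<And>n. x n \<in> fst (b n)" using xP[OF False] by blast+
    have Sne: "S_rel_ne tau P F" using S_rel_neI[OF SP False Fne] .
    then have mxc: "maxIF_in tau F (common_future tau P)" unfolding S_rel_ne_def by blast
    have psF': "future_set tau F'" using IF' unfolding IF_def by blast
    have "F' \<subseteq> common_future tau P"
    proof
      fix w assume w: "w \<in> F'"
      obtain a where a: "a \<in> F'" "chr tau a w" using future_setD2[OF psF' w] by blast
      have fr: "\<forall>N. \<exists>n\<ge>N. a \<in> snd (b n)" using s2 a(1) unfolding LS_def frequently_sequentially by blast
      have "chr tau f a" if f: "f \<in> P" for f
      proof -
        have "f \<in> Ipast_set tau (range x)" using f x(2) by simp
        then obtain m where m: "chr tau f (x m)" unfolding mem_Ipast_set by blast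
        obtain n where n: "n \<ge> m" "a \<in> snd (b n)" using fr by blast
        have "S_rel_ne tau (fst (b n)) (snd (b n))"
          using S_rel_neI[OF cX_S_rel[OF b]] n(2) x(3)[of n] by blast
        then have "chr tau (x n) a" using S_rel_ne_chr[OF lms _ x(3) n(2)] by blast
        moreover have "chr tau f (x n)" using fchain_le[OF lms x(1) n(1) m] .
        ultimately show ?thesis using chr_trans[OF lms] by blast
      qed
      then have "a \<in> {p. \<forall>q\<in>P. chr tau q p}" by blast
      then show "w \<in> common_future tau P" unfolding common_future_def mem_Ifut_set using a(2) by blast
    qed
    then show ?thesis using mxc IF' s1 unfolding maxIF_in_def by blast
  qed
  have "maxIF_in tau F (LS (\<lambda>n. snd (b n)))" unfolding maxIF_in_def using IFF FLS mx by blast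
  then show ?thesis using LI by blast
qed



theorem mainTheorem11:
  fixes sig :: "'a topology" and tau :: "'a \<Rightarrow> 'a \<Rightarrow> ennreal"
    and le :: "'a \<Rightarrow> 'a \<Rightarrow> bool"
  assumes "lorentzian_metric_space sig tau"
    and "full tau"
    and "separable_lms tau"
    and "chron_dense sig tau"
    and "S_property tau"
    and "globally_hyperbolic sig tau le"
    and "\<forall>a\<in>cboundary tau. \<forall>b\<in>cboundary tau. cle tau a b \<longrightarrow> a = b"
    and "p \<in> cX tau"
    and "nbhd (sigma_chr tau) U p"
  shows "\<exists>V. nbhd (sigma_chr tau) V p \<and>
           (\<forall>a\<in>cX tau. \<forall>b\<in>cX tau. \<forall>c\<in>cX tau.
              cchr tau a b \<and> cchr tau b c \<and> a \<in> V \<and> c \<in> V \<longrightarrow> b \<in> U)"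
proof (rule ccontr)
  note lms = assms(1) and full = assms(2) and sep = assms(3) and Sp = assms(5) and gh = assms(6)
    and bd = assms(7) and pX = assms(8)
  assume H: "\<not> ?thesis"
  obtain W where W: "openin (sigma_chr tau) W" "p \<in> W" "W \<subseteq> U"
    using assms(9) unfolding nbhd_def by blast
  have Wc: "chr_closed tau (cX tau - W)" using W(1) unfolding openin_sigma by blast
  obtain P F where pe: "p = (P, F)" by (cases p)
  have SP: "S_rel tau P F" using pX pe unfolding cX_def by simp
  obtain x where x: "P \<noteq> {} \<Longrightarrow> future_chain tau x \<and> Ipast_set tau (range x) = P"
  proof (cases "P = {}")
    case True then show ?thesis using that by blast
  next
    case False
    then show ?thesis using that IP_chain[OF lms sep S_rel_IP[OF SP False]] by blast
  qed
  obtain y where y: "F \<noteq> {} \<Longrightarrow> past_chain tau y \<and> Ifut_set tau (range y) = F"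
  proof (cases "F = {}")
    case True then show ?thesis using that by blast
  next
    case False
    then show ?thesis using that IF_chain[OF lms sep S_rel_IF[OF SP False]] by blast
  qed
  define V where "V n = {c \<in> cX tau. (P \<noteq> {} \<longrightarrow> x n \<in> fst c) \<and> (F \<noteq> {} \<longrightarrow> y n \<in> snd c)}" for n
  have Vopen: "openin (sigma_chr tau) (V n)" for n
    unfolding openin_sigma
  proof
    show "V n \<subseteq> cX tau" unfolding V_def by blast
    show "chr_closed tau (cX tau - V n)"
    proof (rule chr_closedI)
      show "cX tau - V n \<subseteq> cX tau" by blast
    next
      fix s :: "nat \<Rightarrow> 'a set \<times> 'a set" assume s: "\<And>k. s k \<in> cX tau - V n"
      show "chr_limits tau s \<subseteq> cX tau - V n"
      proof
        fix q assume q: "q \<in> chr_limits tau s"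
        obtain P0 F0 where qe: "q = (P0, F0)" by (cases q)
        have "(P0, F0) \<in> chr_limits tau s" using q qe by simp
        then have q0: "(P0, F0) \<in> cX tau"
          "P0 \<noteq> {} \<longrightarrow> P0 \<subseteq> LI (\<lambda>n. fst (s n))"
          "F0 \<noteq> {} \<longrightarrow> F0 \<subseteq> LI (\<lambda>n. snd (s n))"
          unfolding mem_chr_limits by blast+
        show "q \<in> cX tau - V n"
        proof (rule ccontr)
          assume "q \<notin> cX tau - V n"
          then have qV: "(P0, F0) \<in> V n" using q0(1) qe by blast
          have e1: "eventually (\<lambda>k. P \<noteq> {} \<longrightarrow> x n \<in> fst (s k)) sequentially"
          proof (cases "P = {}")
            case True then show ?thesis by simp
          next
            case False
            then have "x n \<in> P0" using qV unfolding V_def by simp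
            then have "x n \<in> LI (\<lambda>n. fst (s n))" using q0(2) by blast
            then show ?thesis unfolding LI_def by (simp add: eventually_mono)
          qed
          have e2: "eventually (\<lambda>k. F \<noteq> {} \<longrightarrow> y n \<in> snd (s k)) sequentially"
          proof (cases "F = {}")
            case True then show ?thesis by simp
          next
            case False
            then have "y n \<in> F0" using qV unfolding V_def by simp
            then have "y n \<in> LI (\<lambda>n. snd (s n))" using q0(3) by blast
            then show ?thesis unfolding LI_def by (simp add: eventually_mono)
          qed
          have "eventually (\<lambda>k. s k \<in> V n) sequentially"
          proof (rule eventually_mono[OF eventually_conj[OF e1 e2]])
            fix k assume "(P \<noteq> {} \<longrightarrow> x n \<in> fst (s k)) \<and> (F \<noteq> {} \<longrightarrow> y n \<in> snd (s k))"
            moreover have "s k \<in> cX tau" using s[of k] by blast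
            ultimately show "s k \<in> V n" unfolding V_def by blast
          qed
          moreover have "\<And>k. s k \<notin> V n" using s by blast
          ultimately have "eventually (\<lambda>k. False) sequentially" by (simp add: eventually_mono)
          then show False by simp
        qed
      qed
    qed
  qed
  have pV: "p \<in> V n" for n
  proof -
    have "P \<noteq> {} \<longrightarrow> x n \<in> P"
    proof
      assume "P \<noteq> {}"
      then have "future_chain tau x \<and> Ipast_set tau (range x) = P" by (rule x)
      then show "x n \<in> P" using fchain_mem by metis
    qed
    moreover have "F \<noteq> {} \<longrightarrow> y n \<in> F"
    proof
      assume "F \<noteq> {}"
      then have "past_chain tau y \<and> Ifut_set tau (range y) = F" by (rule y)
      then show "y n \<in> F" using pchain_mem by metis
    qed
    ultimately show ?thesis unfolding V_def using pX pe by simp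
  qed
  have "\<exists>bb. bb \<in> cX tau \<and> bb \<notin> U \<and> (\<exists>a\<in>cX tau. cchr tau a bb \<and> a \<in> V n) \<and> (\<exists>c\<in>cX tau. cchr tau bb c \<and> c \<in> V n)" for n
  proof -
    have "nbhd (sigma_chr tau) (V n) p" unfolding nbhd_def using Vopen pV by blast
    then have "\<not> (\<forall>a\<in>cX tau. \<forall>b\<in>cX tau. \<forall>c\<in>cX tau.
              cchr tau a b \<and> cchr tau b c \<and> a \<in> V n \<and> c \<in> V n \<longrightarrow> b \<in> U)" using H by blast
    then show ?thesis by blast
  qed
  then obtain b where b: "\<And>n. b n \<in> cX tau \<and> b n \<notin> U \<and> (\<exists>a\<in>cX tau. cchr tau a (b n) \<and> a \<in> V n) \<and> (\<exists>c\<in>cX tau. cchr tau (b n) c \<and> c \<in> V n)"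
    by metis
  have bX: "b n \<in> cX tau" for n using b by blast
  have xb: "x n \<in> fst (b n)" if "P \<noteq> {}" for n
  proof -
    obtain a where a: "a \<in> cX tau" "cchr tau a (b n)" "a \<in> V n" using b by blast
    have "x n \<in> fst a" using a(3) that unfolding V_def by blast
    then show ?thesis using cchr_fst_mono[OF lms sep a(1) bX a(2)] by blast
  qed
  have yb: "y n \<in> snd (b n)" if "F \<noteq> {}" for n
  proof -
    obtain c where c: "c \<in> cX tau" "cchr tau (b n) c" "c \<in> V n" using b by blast
    have "y n \<in> snd c" using c(3) that unfolding V_def by blast
    then show ?thesis using cchr_snd_mono[OF lms sep bX c(1) c(2)] by blast
  qed
  have bC: "b n \<in> cX tau - W" for n using b W(3) by blast
  have lim_sub: "chr_limits tau b \<subseteq> cX tau - W" using chr_closedD[OF Wc bC] .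
  have hP: "P \<noteq> {} \<longrightarrow> P \<subseteq> LI (\<lambda>n. fst (b n)) \<and> maxIP_in tau P (LS (\<lambda>n. fst (b n)))"
  proof
    assume Pne: "P \<noteq> {}"
    have x': "future_chain tau x" "Ipast_set tau (range x) = P" using x[OF Pne] by blast+
    show "P \<subseteq> LI (\<lambda>n. fst (b n)) \<and> maxIP_in tau P (LS (\<lambda>n. fst (b n)))"
      by (rule P_limit[OF lms full sep Sp gh bd _ Pne x' bX xb[OF Pne]])
        (use pX pe y yb in auto)
  qed
  have hF: "F \<noteq> {} \<longrightarrow> F \<subseteq> LI (\<lambda>n. snd (b n)) \<and> maxIF_in tau F (LS (\<lambda>n. snd (b n)))"
  proof
    assume Fne: "F \<noteq> {}"
    have y': "past_chain tau y" "Ifut_set tau (range y) = F" using y[OF Fne] by blast+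
    show "F \<subseteq> LI (\<lambda>n. snd (b n)) \<and> maxIF_in tau F (LS (\<lambda>n. snd (b n)))"
      by (rule F_limit[OF lms full sep Sp gh bd _ Fne y' bX yb[OF Fne]])
        (use pX pe x xb in auto)
  qed
  have "(P, F) \<in> chr_limits tau b" unfolding mem_chr_limits using pX pe hP hF by blast
  then have "p \<notin> W" using lim_sub pe by blast
  then show False using W(2) by blast
qed


end
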